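(* Let $(M,\otimes,I,\lambda,a)$ be a monoidal category and let $C$ be an $M$-actegory. Regard $M$ as an $M$-actegory via $\odot_M=\otimes$. Then, as Tambara modules (i.e. up to isomorphism in the relevant hom-categories of $\mathit{Tamb}$, compatibly with strengths): (1) $R_I\cong L_I\cong M(-,=)$, where $R_I\in\mathit{Tamb}_{M,M}$ and $L_I\in\mathit{Tamb}_{M,M}$ are formed from the unit object $I$ of $M$ regarded as an object of the $M$-actegory $M$, and $M(-,=)$ is the hom-profunctor of $M$; (2) for every $x\in C$ and $m\in M$, $R_x\otimes R_m\cong R_{m\odot_C x}$ in $\mathit{Tamb}_{C,M}$ (with $R_m\in\mathit{Tamb}_{M,M}$); (3) for every $x\in C$ and $m\in M$, $L_m\otimes L_x\cong L_{m\odot_C x}$ in $\mathit{Tamb}_{M,C}$ (with $L_m\in\mathit{Tamb}_{M,M}$).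
   Context: $(M,\otimes,I,\lambda,a)$ is a monoidal category ($\lambda$ left unitor, $a$ associator). An $M$-actegory is a category $C$ with a functor $\odot_C:M\times C\to C$ and natural isomorphisms $\lambda_x:I\odot_C x\to x$, $a_{m,n,x}:(m\otimes n)\odot_C x\to m\odot_C(n\odot_C x)$ satisfying the standard coherence axioms with the monoidal structure of $M$; $M$ is itself an $M$-actegory with $\odot_M=\otimes$. Composition is written in diagrammatic order $f;g$ ($f$ first). For $M$-actegories $C,D$, a Tambara module $P\in\mathit{Tamb}_{C,D}$ is a functor $P:C^{op}\times D\to\mathrm{Set}$ together with maps $\mathrm{st}_{m,c,d}:P(c,d)\to P(m\odot_C c,m\odot_D d)$ natural in $c,d$ and (di)natural in $m$, compatible with the unitors and associators of the actegories; morphisms are natural transformations commuting with the strengths. $\mathit{Tamb}$ is the bicategory whose objects are $M$-actegories, whose hom-categories are $\mathit{Tamb}_{C,D}$, whose identity 1-cell on $C$ is the hom-profunctor $C(-,=)$ (strength given by the action), and whose composition of $P\in\mathit{Tamb}_{C,D}$ and $Q\in\mathit{Tamb}_{D,E}$ is $(P\otimes Q)(c,e)=\int^{d\in D}P(c,d)\times Q(d,e)$ with the induced strength. For $x\in C$: $R_x\in\mathit{Tamb}_{C,M}$ is the profunctor $(c,n)\mapsto C(c,n\odot_C x)$ with strength sending $h:c\to n\odot x$ to $(m\odot h);a^{-1}_{m,n,x}:m\odot c\to (m\otimes n)\odot x$; $L_x\in\mathit{Tamb}_{M,C}$ is $(n,c)\mapsto C(n\odot_C x,c)$ with strength sending $h:n\odot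 x\to c$ to $a_{m,n,x};(m\odot h)$. *)

theory Defs
  imports Main
begin

section \<open>Categories (arrows know their endpoints; composition in diagrammatic order)\<close>

record ('o,'a) cat =
  c_ob   :: "'o set"
  c_hom  :: "'o \<Rightarrow> 'o \<Rightarrow> 'a set"
  c_id   :: "'o \<Rightarrow> 'a"
  c_comp :: "'a \<Rightarrow> 'a \<Rightarrow> 'a"   (* c_comp f g = f ; g  (f first) *)
  c_dom  :: "'a \<Rightarrow> 'o"
  c_cod  :: "'a \<Rightarrow> 'o"

definition is_cat :: "('o,'a) cat \<Rightarrow> bool" where
  "is_cat C \<longleftrightarrow>
     (\<forall>x y. c_hom C x y \<noteq> {} \<longrightarrow> x \<in> c_ob C \<and> y \<in> c_ob C) \<and>
     (\<forall>x y f. f \<in> c_hom C x y \<longrightarrow> c_dom C f = x \<and> c_cod C f = y) \<and>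
     (\<forall>x\<in>c_ob C. c_id C x \<in> c_hom C x x) \<and>
     (\<forall>x y z f g. f \<in> c_hom C x y \<longrightarrow> g \<in> c_hom C y z \<longrightarrow> c_comp C f g \<in> c_hom C x z) \<and>
     (\<forall>x y f. f \<in> c_hom C x y \<longrightarrow> c_comp C (c_id C x) f = f \<and> c_comp C f (c_id C y) = f) \<and>
     (\<forall>w x y z f g h. f \<in> c_hom C w x \<longrightarrow> g \<in> c_hom C x y \<longrightarrow> h \<in> c_hom C y z \<longrightarrow>
        c_comp C (c_comp C f g) h = c_comp C f (c_comp C g h))"

definition iso_in :: "('o,'a) cat \<Rightarrow> 'o \<Rightarrow> 'o \<Rightarrow> 'a \<Rightarrow> bool" where
  "iso_in C x y f \<longleftrightarrow> f \<in> c_hom C x y \<and>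
     (\<exists>g\<in>c_hom C y x. c_comp C f g = c_id C x \<and> c_comp C g f = c_id C y)"

definition inv_in :: "('o,'a) cat \<Rightarrow> 'o \<Rightarrow> 'o \<Rightarrow> 'a \<Rightarrow> 'a" where
  "inv_in C x y f = (SOME g. g \<in> c_hom C y x \<and> c_comp C f g = c_id C x \<and> c_comp C g f = c_id C y)"

record ('m,'f) moncat =
  mc  :: "('m,'f) cat"
  tn  :: "'m \<Rightarrow> 'm \<Rightarrow> 'm"
  tna :: "'f \<Rightarrow> 'f \<Rightarrow> 'f"
  mI  :: "'m"
  lu  :: "'m \<Rightarrow> 'f"              (* left unitor  I\<otimes>m \<rightarrow> m *)
  ru  :: "'m \<Rightarrow> 'f"              (* right unitor m\<otimes>I \<rightarrow> m *)
  asc :: "'m \<Rightarrow> 'm \<Rightarrow> 'm \<Rightarrow> 'f"  (* associator (m\<otimes>n)\<otimes>p \<rightarrow> m\<otimes>(n\<otimes>p) *)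

definition is_moncat :: "('m,'f) moncat \<Rightarrow> bool" where
  "is_moncat M \<longleftrightarrow> (let C = mc M; T = tn M; Ta = tna M; I = mI M;
                        cp = c_comp C; hm = c_hom C; i = c_id C in
     is_cat C \<and>
     (\<forall>m\<in>c_ob C. \<forall>n\<in>c_ob C. T m n \<in> c_ob C) \<and>
     (\<forall>m m' n n' f g. f \<in> hm m m' \<longrightarrow> g \<in> hm n n' \<longrightarrow> Ta f g \<in> hm (T m n) (T m' n')) \<and>
     (\<forall>m\<in>c_ob C. \<forall>n\<in>c_ob C. Ta (i m) (i n) = i (T m n)) \<and>
     (\<forall>m m' m'' n n' n'' f f' g g'. f \<in> hm m m' \<longrightarrow> f' \<in> hm m' m'' \<longrightarrow>
        g \<in> hm n n' \<longrightarrow> g' \<in> hm n' n'' \<longrightarrow>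
        Ta (cp f f') (cp g g') = cp (Ta f g) (Ta f' g')) \<and>
     I \<in> c_ob C \<and>
     (\<forall>m\<in>c_ob C. iso_in C (T I m) m (lu M m)) \<and>
     (\<forall>m m' f. f \<in> hm m m' \<longrightarrow> cp (Ta (i I) f) (lu M m') = cp (lu M m) f) \<and>
     (\<forall>m\<in>c_ob C. iso_in C (T m I) m (ru M m)) \<and>
     (\<forall>m m' f. f \<in> hm m m' \<longrightarrow> cp (Ta f (i I)) (ru M m') = cp (ru M m) f) \<and>
     (\<forall>m\<in>c_ob C. \<forall>n\<in>c_ob C. \<forall>p\<in>c_ob C. iso_in C (T (T m n) p) (T m (T n p)) (asc M m n p)) \<and>
     (\<forall>m m' n n' p p' f g h. f \<in> hm m m' \<longrightarrow> g \<in> hm n n' \<longrightarrow> h \<in> hm p p' \<longrightarrow>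
        cp (Ta (Ta f g) h) (asc M m' n' p') = cp (asc M m n p) (Ta f (Ta g h))) \<and>
     (\<forall>m\<in>c_ob C. \<forall>n\<in>c_ob C. \<forall>p\<in>c_ob C. \<forall>q\<in>c_ob C.
        cp (asc M (T m n) p q) (asc M m n (T p q)) =
        cp (cp (Ta (asc M m n p) (i q)) (asc M m (T n p) q)) (Ta (i m) (asc M n p q))) \<and>
     (\<forall>m\<in>c_ob C. \<forall>n\<in>c_ob C.
        cp (asc M m I n) (Ta (i m) (lu M n)) = Ta (ru M m) (i n)))"

record ('m,'f,'c,'g) actegory =
  ac   :: "('c,'g) cat"
  act  :: "'m \<Rightarrow> 'c \<Rightarrow> 'c"
  acta :: "'f \<Rightarrow> 'g \<Rightarrow> 'g"
  alu  :: "'c \<Rightarrow> 'g"                (* unitor I \<odot> x \<rightarrow> x *)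
  aas  :: "'m \<Rightarrow> 'm \<Rightarrow> 'c \<Rightarrow> 'g"    (* associator (m\<otimes>n)\<odot>x \<rightarrow> m\<odot>(n\<odot>x) *)

definition is_actegory :: "('m,'f) moncat \<Rightarrow> ('m,'f,'c,'g) actegory \<Rightarrow> bool" where
  "is_actegory M A \<longleftrightarrow> (let MC = mc M; C = ac A; T = tn M; Ta = tna M; I = mI M;
        Ac = act A; Oa = acta A; cp = c_comp C; hm = c_hom C; i = c_id C; iM = c_id MC in
     is_moncat M \<and> is_cat C \<and>
     (\<forall>m\<in>c_ob MC. \<forall>x\<in>c_ob C. Ac m x \<in> c_ob C) \<and>
     (\<forall>m m' x x' u h. u \<in> c_hom MC m m' \<longrightarrow> h \<in> hm x x' \<longrightarrow> Oa u h \<in> hm (Ac m x) (Ac m' x')) \<and>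
     (\<forall>m\<in>c_ob MC. \<forall>x\<in>c_ob C. Oa (iM m) (i x) = i (Ac m x)) \<and>
     (\<forall>m m' m'' x x' x'' u u' h h'. u \<in> c_hom MC m m' \<longrightarrow> u' \<in> c_hom MC m' m'' \<longrightarrow>
        h \<in> hm x x' \<longrightarrow> h' \<in> hm x' x'' \<longrightarrow>
        Oa (c_comp MC u u') (cp h h') = cp (Oa u h) (Oa u' h')) \<and>
     (\<forall>x\<in>c_ob C. iso_in C (Ac I x) x (alu A x)) \<and>
     (\<forall>x x' h. h \<in> hm x x' \<longrightarrow> cp (Oa (iM I) h) (alu A x') = cp (alu A x) h) \<and>
     (\<forall>m\<in>c_ob MC. \<forall>n\<in>c_ob MC. \<forall>x\<in>c_ob C. iso_in C (Ac (T m n) x) (Ac m (Ac n x)) (aas A m n x)) \<and>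
     (\<forall>m m' n n' x x' u v h. u \<in> c_hom MC m m' \<longrightarrow> v \<in> c_hom MC n n' \<longrightarrow> h \<in> hm x x' \<longrightarrow>
        cp (Oa (Ta u v) h) (aas A m' n' x') = cp (aas A m n x) (Oa u (Oa v h))) \<and>
     (\<forall>m\<in>c_ob MC. \<forall>n\<in>c_ob MC. \<forall>p\<in>c_ob MC. \<forall>x\<in>c_ob C.
        cp (aas A (T m n) p x) (aas A m n (Ac p x)) =
        cp (cp (Oa (asc M m n p) (i x)) (aas A m (T n p) x)) (Oa (iM m) (aas A n p x))) \<and>
     (\<forall>m\<in>c_ob MC. \<forall>x\<in>c_ob C.
        cp (aas A I m x) (alu A (Ac m x)) = Oa (lu M m) (i x)) \<and>
     (\<forall>m\<in>c_ob MC. \<forall>x\<in>c_ob C.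
        cp (aas A m I x) (Oa (iM m) (alu A x)) = Oa (ru M m) (i x)))"

definition self_act :: "('m,'f) moncat \<Rightarrow> ('m,'f,'m,'f) actegory" where
  "self_act M = \<lparr> ac = mc M, act = tn M, acta = tna M, alu = lu M, aas = asc M \<rparr>"

section \<open>Tambara modules (profunctors C^op x D \<rightarrow> Set with strength)\<close>

text \<open>pobj P c d = P(c,d); pmap P f g x = P(f,g)(x) for f : c' \<rightarrow> c in C, g : d \<rightarrow> d' in D;
  pst P m c d = st_{m,c,d}.\<close>
record ('m,'c,'d,'x,'g,'h) tamb =
  pobj :: "'c \<Rightarrow> 'd \<Rightarrow> 'x set"
  pmap :: "'g \<Rightarrow> 'h \<Rightarrow> 'x \<Rightarrow> 'x"
  pst  :: "'m \<Rightarrow> 'c \<Rightarrow> 'd \<Rightarrow> 'x \<Rightarrow> 'x"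

definition tamb_iso :: "('m,'f) moncat \<Rightarrow> ('m,'f,'c,'g) actegory \<Rightarrow> ('m,'f,'d,'h) actegory
    \<Rightarrow> ('m,'c,'d,'x,'g,'h) tamb \<Rightarrow> ('m,'c,'d,'y,'g,'h) tamb \<Rightarrow> bool" where
  "tamb_iso M C D P Q \<longleftrightarrow> (\<exists>\<phi> :: 'c \<Rightarrow> 'd \<Rightarrow> 'x \<Rightarrow> 'y.
     (\<forall>c\<in>c_ob (ac C). \<forall>d\<in>c_ob (ac D). bij_betw (\<phi> c d) (pobj P c d) (pobj Q c d)) \<and>
     (\<forall>c c' d d' f g x. f \<in> c_hom (ac C) c' c \<longrightarrow> g \<in> c_hom (ac D) d d' \<longrightarrow> x \<in> pobj P c d \<longrightarrow>
        \<phi> c' d' (pmap P f g x) = pmap Q f g (\<phi> c d x)) \<and>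
     (\<forall>m\<in>c_ob (mc M). \<forall>c\<in>c_ob (ac C). \<forall>d\<in>c_ob (ac D). \<forall>x\<in>pobj P c d.
        \<phi> (act C m c) (act D m d) (pst P m c d x) = pst Q m c d (\<phi> c d x)))"

definition hom_tamb :: "('m,'f) moncat \<Rightarrow> ('m,'f,'c,'g) actegory \<Rightarrow> ('m,'c,'c,'g,'g,'g) tamb" where
  "hom_tamb M C = \<lparr> pobj = (\<lambda>c d. c_hom (ac C) c d),
                    pmap = (\<lambda>f g h. c_comp (ac C) (c_comp (ac C) f h) g),
                    pst = (\<lambda>m c d h. acta C (c_id (mc M) m) h) \<rparr>"

definition R_tamb :: "('m,'f) moncat \<Rightarrow> ('m,'f,'c,'g) actegory \<Rightarrow> 'c \<Rightarrow> ('m,'c,'m,'g,'g,'f) tamb" where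
  "R_tamb M C x = \<lparr> pobj = (\<lambda>c n. c_hom (ac C) c (act C n x)),
      pmap = (\<lambda>f u h. c_comp (ac C) (c_comp (ac C) f h) (acta C u (c_id (ac C) x))),
      pst = (\<lambda>m c n h. c_comp (ac C) (acta C (c_id (mc M) m) h)
               (inv_in (ac C) (act C (tn M m n) x) (act C m (act C n x)) (aas C m n x))) \<rparr>"

definition L_tamb :: "('m,'f) moncat \<Rightarrow> ('m,'f,'c,'g) actegory \<Rightarrow> 'c \<Rightarrow> ('m,'m,'c,'g,'f,'g) tamb" where
  "L_tamb M C x = \<lparr> pobj = (\<lambda>n c. c_hom (ac C) (act C n x) c),
      pmap = (\<lambda>u f h. c_comp (ac C) (c_comp (ac C) (acta C u (c_id (ac C) x)) h) f),
      pst = (\<lambda>m n c h. c_comp (ac C) (aas C m n x) (acta C (c_id (mc M) m) h)) \<rparr>"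

text \<open>Composition of 1-cells: the coend \<integral>^d P(c,d) \<times> Q(d,e), as the quotient of
  \<Sigma>_d P(c,d) \<times> Q(d,e) by the equivalence relation generated by
  (d', P(c,g) p, q) ~ (d, p, Q(g,e) q) for g : d \<rightarrow> d'.\<close>
definition coend_carrier :: "('m,'f,'d,'h) actegory \<Rightarrow> ('m,'c,'d,'x,'g,'h) tamb
     \<Rightarrow> ('m,'d,'e,'y,'h,'k) tamb \<Rightarrow> 'c \<Rightarrow> 'e \<Rightarrow> ('d \<times> 'x \<times> 'y) set" where
  "coend_carrier D P Q c e = {(d,p,q). d \<in> c_ob (ac D) \<and> p \<in> pobj P c d \<and> q \<in> pobj Q d e}"

definition coend_gen :: "('m,'f,'c,'g) actegory \<Rightarrow> ('m,'f,'d,'h) actegory \<Rightarrow> ('m,'f,'e,'k) actegory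
     \<Rightarrow> ('m,'c,'d,'x,'g,'h) tamb \<Rightarrow> ('m,'d,'e,'y,'h,'k) tamb \<Rightarrow> 'c \<Rightarrow> 'e
     \<Rightarrow> (('d \<times> 'x \<times> 'y) \<times> ('d \<times> 'x \<times> 'y)) set" where
  "coend_gen C D E P Q c e =
     {((d', pmap P (c_id (ac C) c) g p, q), (d, p, pmap Q g (c_id (ac E) e) q)) | d d' g p q.
        d \<in> c_ob (ac D) \<and> d' \<in> c_ob (ac D) \<and> g \<in> c_hom (ac D) d d' \<and>
        p \<in> pobj P c d \<and> q \<in> pobj Q d' e}"

definition coend_eqv where
  "coend_eqv C D E P Q c e = (coend_gen C D E P Q c e \<union> (coend_gen C D E P Q c e)\<inverse>)\<^sup>*"

definition tamb_comp :: "('m,'f,'c,'g) actegory \<Rightarrow> ('m,'f,'d,'h) actegory \<Rightarrow> ('m,'f,'e,'k) actegory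
     \<Rightarrow> ('m,'c,'d,'x,'g,'h) tamb \<Rightarrow> ('m,'d,'e,'y,'h,'k) tamb
     \<Rightarrow> ('m,'c,'e,('d \<times> 'x \<times> 'y) set,'g,'k) tamb" where
  "tamb_comp C D E P Q = \<lparr>
     pobj = (\<lambda>c e. coend_carrier D P Q c e // coend_eqv C D E P Q c e),
     pmap = (\<lambda>f k X. coend_eqv C D E P Q (c_dom (ac C) f) (c_cod (ac E) k) ``
               {(case (SOME t. t \<in> X) of (d,p,q) \<Rightarrow>
                  (d, pmap P f (c_id (ac D) d) p, pmap Q (c_id (ac D) d) k q))}),
     pst = (\<lambda>m c e X. coend_eqv C D E P Q (act C m c) (act E m e) ``
               {(case (SOME t. t \<in> X) of (d,p,q) \<Rightarrow>
                  (act D m d, pst P m c d p, pst Q m d e q))}) \<rparr>"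

end

theory Submission
  imports Defs
begin


lemma quot_closed:
  assumes "gen \<subseteq> A \<times> A" "(a,t) \<in> (gen \<union> gen\<inverse>)\<^sup>*" "a \<in> A"
  shows "t \<in> A"
  using assms(2,3,1) by (induction rule: rtrancl_induct) auto

lemma quot_inv:
  assumes "\<And>u v. (u,v) \<in> gen \<Longrightarrow> F u = F v" "(a,t) \<in> (gen \<union> gen\<inverse>)\<^sup>*"
  shows "F t = F a"
  using assms(2) proof (induction rule: rtrancl_induct)
  case (step y z) then show ?case using assms(1) by (metis Un_iff converse_iff)
qed simp

lemma quot_some:
  assumes "\<And>u v. (u,v) \<in> gen \<Longrightarrow> F u = F v" "gen \<subseteq> A \<times> A" "a \<in> A"
  shows "(SOME t. t \<in> (gen \<union> gen\<inverse>)\<^sup>* `` {a}) \<in> A \<and> F (SOME t. t \<in> (gen \<union> gen\<inverse>)\<^sup>* `` {a}) = F a"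
proof -
  let ?R = "(gen \<union> gen\<inverse>)\<^sup>*"
  have "(SOME t. t \<in> ?R `` {a}) \<in> ?R `` {a}" by (rule someI[of _ a]) auto
  then have r: "(a, SOME t. t \<in> ?R `` {a}) \<in> ?R" by simp
  show ?thesis using quot_closed[OF assms(2) r assms(3)] quot_inv[where F=F and gen=gen, OF assms(1) r] by simp
qed

lemma quot_rep:
  assumes "\<And>u v. (u,v) \<in> gen \<Longrightarrow> F u = F v" "gen \<subseteq> A \<times> A" "X \<in> A // (gen \<union> gen\<inverse>)\<^sup>*"
  shows "(SOME t. t \<in> X) \<in> A"
  using assms quot_some[where F=F and gen=gen and A=A, OF assms(1,2)] unfolding quotient_def by blast

lemma quot_bij:
  assumes inv: "\<And>u v. (u,v) \<in> gen \<Longrightarrow> F u = F v" and sub: "gen \<subseteq> A \<times> A"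
  and FA: "\<And>a. a\<in>A \<Longrightarrow> F a \<in> B"
  and sB: "\<And>h. h\<in>B \<Longrightarrow> s h \<in> A" and Fs: "\<And>h. h\<in>B \<Longrightarrow> F (s h) = h"
  and sR: "\<And>a. a\<in>A \<Longrightarrow> (a, s (F a)) \<in> (gen \<union> gen\<inverse>)\<^sup>*"
  shows "bij_betw (\<lambda>X. F (SOME t. t\<in>X)) (A // (gen \<union> gen\<inverse>)\<^sup>*) B"
proof -
  let ?R = "(gen \<union> gen\<inverse>)\<^sup>*"
  have sym: "sym ?R" by (simp add: sym_Un_converse sym_rtrancl)
  have val: "\<And>a. a \<in> A \<Longrightarrow> F (SOME t. t \<in> ?R `` {a}) = F a" using quot_some[where F=F and gen=gen and A=A, OF inv sub] by blast
  show ?thesis unfolding bij_betw_def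
  proof
    show "inj_on (\<lambda>X. F (SOME t. t\<in>X)) (A // ?R)"
    proof (rule inj_onI)
      fix X Y assume X: "X \<in> A // ?R" and Y: "Y \<in> A // ?R" and eq: "F (SOME t. t\<in>X) = F (SOME t. t\<in>Y)"
      obtain a where a: "a \<in> A" "X = ?R `` {a}" using X unfolding quotient_def by blast
      obtain b where b: "b \<in> A" "Y = ?R `` {b}" using Y unfolding quotient_def by blast
      have "F a = F b" using eq a b val by simp
      then have "(a, s (F b)) \<in> ?R" "(b, s (F b)) \<in> ?R" using sR a b by metis+
      then have ab: "(a,b) \<in> ?R" using symD[OF sym] rtrancl_trans by metis
      then have ba: "(b,a) \<in> ?R" using symD[OF sym] by metis
      have "\<And>z. (a,z) \<in> ?R \<longleftrightarrow> (b,z) \<in> ?R" using rtrancl_trans[OF ab] rtrancl_trans[OF ba] by blast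
      then show "X = Y" unfolding a b by blast
    qed
    show "(\<lambda>X. F (SOME t. t\<in>X)) ` (A // ?R) = B"
    proof
      show "(\<lambda>X. F (SOME t. t\<in>X)) ` (A // ?R) \<subseteq> B" unfolding quotient_def using val FA by auto
      show "B \<subseteq> (\<lambda>X. F (SOME t. t\<in>X)) ` (A // ?R)"
      proof
        fix h assume h: "h \<in> B"
        have "?R `` {s h} \<in> A // ?R" using sB[OF h] unfolding quotient_def by blast
        moreover have "F (SOME t. t \<in> ?R `` {s h}) = h" using val[OF sB[OF h]] Fs[OF h] by simp
        ultimately show "h \<in> (\<lambda>X. F (SOME t. t\<in>X)) ` (A // ?R)" by force
      qed
    qed
  qed
qed



locale cat_loc = fixes C :: "('o,'a) cat" assumes cat: "is_cat C"
begin
definition arr where "arr f \<longleftrightarrow> f \<in> c_hom C (c_dom C f) (c_cod C f)"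

lemma c1: "f \<in> c_hom C x y \<Longrightarrow> x \<in> c_ob C \<and> y \<in> c_ob C" using cat[unfolded is_cat_def, THEN conjunct1] by blast
lemma c2: "f \<in> c_hom C x y \<Longrightarrow> c_dom C f = x \<and> c_cod C f = y" using cat[unfolded is_cat_def, THEN conjunct2, THEN conjunct1] by blast
lemma c3: "x \<in> c_ob C \<Longrightarrow> c_id C x \<in> c_hom C x x" using cat[unfolded is_cat_def, THEN conjunct2, THEN conjunct2, THEN conjunct1] by blast
lemma c4: "f \<in> c_hom C x y \<Longrightarrow> g \<in> c_hom C y z \<Longrightarrow> c_comp C f g \<in> c_hom C x z" using cat[unfolded is_cat_def, THEN conjunct2, THEN conjunct2, THEN conjunct2, THEN conjunct1] by blast
lemma c5: "f \<in> c_hom C x y \<Longrightarrow> c_comp C (c_id C x) f = f \<and> c_comp C f (c_id C y) = f" using cat[unfolded is_cat_def, THEN conjunct2, THEN conjunct2, THEN conjunct2, THEN conjunct2, THEN conjunct1] by blast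
lemma c6: "f \<in> c_hom C w x \<Longrightarrow> g \<in> c_hom C x y \<Longrightarrow> h \<in> c_hom C y z \<Longrightarrow>
        c_comp C (c_comp C f g) h = c_comp C f (c_comp C g h)" using cat[unfolded is_cat_def, THEN conjunct2, THEN conjunct2, THEN conjunct2, THEN conjunct2, THEN conjunct2] by blast

lemma hom_iff: "f \<in> c_hom C x y \<longleftrightarrow> arr f \<and> c_dom C f = x \<and> c_cod C f = y"
  using c2 arr_def by metis

lemma arr_ob[simp]: "arr f \<Longrightarrow> c_dom C f \<in> c_ob C" "arr f \<Longrightarrow> c_cod C f \<in> c_ob C"
  using c1 arr_def by blast+

lemma id_simps[simp]: "x \<in> c_ob C \<Longrightarrow> arr (c_id C x)" "x \<in> c_ob C \<Longrightarrow> c_dom C (c_id C x) = x"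
   "x \<in> c_ob C \<Longrightarrow> c_cod C (c_id C x) = x"
  using c3 hom_iff by metis+

lemma comp_simps[simp]: 
  "arr f \<Longrightarrow> arr g \<Longrightarrow> c_cod C f = c_dom C g \<Longrightarrow> arr (c_comp C f g)"
  "arr f \<Longrightarrow> arr g \<Longrightarrow> c_cod C f = c_dom C g \<Longrightarrow> c_dom C (c_comp C f g) = c_dom C f"
  "arr f \<Longrightarrow> arr g \<Longrightarrow> c_cod C f = c_dom C g \<Longrightarrow> c_cod C (c_comp C f g) = c_cod C g"
  using c4 hom_iff by metis+

lemma id_l[simp]: "arr f \<Longrightarrow> c_dom C f = x \<Longrightarrow> c_comp C (c_id C x) f = f"
  using c5 hom_iff by metis
lemma id_r[simp]: "arr f \<Longrightarrow> c_cod C f = x \<Longrightarrow> c_comp C f (c_id C x) = f"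
  using c5 hom_iff by metis

lemma assoc[simp]: "arr f \<Longrightarrow> arr g \<Longrightarrow> arr h \<Longrightarrow> c_cod C f = c_dom C g \<Longrightarrow> c_cod C g = c_dom C h \<Longrightarrow>
   c_comp C (c_comp C f g) h = c_comp C f (c_comp C g h)"
  using c6 hom_iff by metis

lemma iso_props: assumes "iso_in C x y f"
  shows "inv_in C x y f \<in> c_hom C y x \<and> c_comp C f (inv_in C x y f) = c_id C x \<and> c_comp C (inv_in C x y f) f = c_id C y"
proof -
  have "\<exists>g. g \<in> c_hom C y x \<and> c_comp C f g = c_id C x \<and> c_comp C g f = c_id C y"
    using assms unfolding iso_in_def by blast
  then show ?thesis unfolding inv_in_def by (rule someI_ex)
qed

lemma iso_simps[simp]: assumes "iso_in C x y f"
  shows "arr f" "c_dom C f = x" "c_cod C f = y" "arr (inv_in C x y f)" "c_dom C (inv_in C x y f) = y"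
   "c_cod C (inv_in C x y f) = x"
   "c_comp C f (inv_in C x y f) = c_id C x" "c_comp C (inv_in C x y f) f = c_id C y"
  using assms iso_props[OF assms] unfolding iso_in_def hom_iff by auto

lemma iso_cancel[simp]: assumes "iso_in C x y f"
  shows "arr h \<Longrightarrow> c_dom C h = y \<Longrightarrow> c_comp C (inv_in C x y f) (c_comp C f h) = h"
        "arr h \<Longrightarrow> c_dom C h = x \<Longrightarrow> c_comp C f (c_comp C (inv_in C x y f) h) = h"
  using assms by (simp_all flip: assoc)

lemma iso_epi: "iso_in C x y f \<Longrightarrow> arr g \<Longrightarrow> arr h \<Longrightarrow> c_cod C g = x \<Longrightarrow> c_cod C h = x \<Longrightarrow>
  c_comp C g f = c_comp C h f \<Longrightarrow> g = h"
  by (metis assoc iso_simps id_r)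

lemma iso_monoL: "iso_in C x y f \<Longrightarrow> arr g \<Longrightarrow> arr h \<Longrightarrow> c_dom C g = y \<Longrightarrow> c_dom C h = y \<Longrightarrow>
  c_comp C f g = c_comp C f h \<Longrightarrow> g = h"
  by (metis iso_cancel(1))

end

locale mon_loc = fixes M :: "('m,'f) moncat" assumes mon: "is_moncat M"
begin
sublocale M: cat_loc "mc M" using mon unfolding is_moncat_def Let_def by (simp add: cat_loc_def)

abbreviation "T \<equiv> tn M"
abbreviation "Ta \<equiv> tna M"
abbreviation "I \<equiv> mI M"
abbreviation "mob \<equiv> c_ob (mc M)"
abbreviation "mcp \<equiv> c_comp (mc M)"
abbreviation "mid \<equiv> c_id (mc M)"
abbreviation "mdom \<equiv> c_dom (mc M)"
abbreviation "mcod \<equiv> c_cod (mc M)"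

lemmas ax = mon[unfolded is_moncat_def Let_def]

lemma T_ob[simp]: "m \<in> mob \<Longrightarrow> n \<in> mob \<Longrightarrow> T m n \<in> mob" using ax[THEN conjunct2, THEN conjunct1] by blast
lemma I_ob[simp]: "I \<in> mob" using ax[THEN conjunct2, THEN conjunct2, THEN conjunct2, THEN conjunct2, THEN conjunct2, THEN conjunct1] by blast
lemma m2: "f \<in> c_hom (mc M) m m' \<Longrightarrow> g \<in> c_hom (mc M) n n' \<Longrightarrow> Ta f g \<in> c_hom (mc M) (T m n) (T m' n')"
  using ax[THEN conjunct2, THEN conjunct2, THEN conjunct1] by blast
lemma Ta_id[simp]: "m \<in> mob \<Longrightarrow> n \<in> mob \<Longrightarrow> Ta (mid m) (mid n) = mid (T m n)"
  using ax[THEN conjunct2, THEN conjunct2, THEN conjunct2, THEN conjunct1] by blast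
lemma m4: "f \<in> c_hom (mc M) m m' \<Longrightarrow> f' \<in> c_hom (mc M) m' m'' \<Longrightarrow>
        g \<in> c_hom (mc M) n n' \<Longrightarrow> g' \<in> c_hom (mc M) n' n'' \<Longrightarrow>
        Ta (mcp f f') (mcp g g') = mcp (Ta f g) (Ta f' g')"
  using ax[THEN conjunct2, THEN conjunct2, THEN conjunct2, THEN conjunct2, THEN conjunct1] by blast
lemma m_ru: "f \<in> c_hom (mc M) m m' \<Longrightarrow> mcp (Ta f (mid I)) (ru M m') = mcp (ru M m) f"
  using ax[THEN conjunct2, THEN conjunct2, THEN conjunct2, THEN conjunct2, THEN conjunct2, THEN conjunct2, THEN conjunct2, THEN conjunct2, THEN conjunct2, THEN conjunct1] by blast
lemma m_asc: "f \<in> c_hom (mc M) m m' \<Longrightarrow> g \<in> c_hom (mc M) n n' \<Longrightarrow> h \<in> c_hom (mc M) p p' \<Longrightarrow>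
        mcp (Ta (Ta f g) h) (asc M m' n' p') = mcp (asc M m n p) (Ta f (Ta g h))"
  using ax[THEN conjunct2, THEN conjunct2, THEN conjunct2, THEN conjunct2, THEN conjunct2, THEN conjunct2, THEN conjunct2, THEN conjunct2, THEN conjunct2, THEN conjunct2, THEN conjunct2, THEN conjunct1] by blast

lemma Ta_simps[simp]: "M.arr f \<Longrightarrow> M.arr g \<Longrightarrow> M.arr (Ta f g)"
  "M.arr f \<Longrightarrow> M.arr g \<Longrightarrow> mdom (Ta f g) = T (mdom f) (mdom g)"
  "M.arr f \<Longrightarrow> M.arr g \<Longrightarrow> mcod (Ta f g) = T (mcod f) (mcod g)"
  using m2 M.hom_iff by metis+

lemma Ta_comp: "M.arr f \<Longrightarrow> M.arr f' \<Longrightarrow> M.arr g \<Longrightarrow> M.arr g' \<Longrightarrow> mcod f = mdom f' \<Longrightarrow> mcod g = mdom g' \<Longrightarrow>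
   Ta (mcp f f') (mcp g g') = mcp (Ta f g) (Ta f' g')"
  using m4 M.hom_iff by metis

lemma asc_iso[simp]: "m \<in> mob \<Longrightarrow> n \<in> mob \<Longrightarrow> p \<in> mob \<Longrightarrow> iso_in (mc M) (T (T m n) p) (T m (T n p)) (asc M m n p)"
  using ax[THEN conjunct2, THEN conjunct2, THEN conjunct2, THEN conjunct2, THEN conjunct2, THEN conjunct2, THEN conjunct2, THEN conjunct2, THEN conjunct2, THEN conjunct2, THEN conjunct1] by blast
lemma ru_iso[simp]: "m \<in> mob \<Longrightarrow> iso_in (mc M) (T m I) m (ru M m)"
  using ax[THEN conjunct2, THEN conjunct2, THEN conjunct2, THEN conjunct2, THEN conjunct2, THEN conjunct2, THEN conjunct2, THEN conjunct2, THEN conjunct1] by blast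
lemma lu_iso[simp]: "m \<in> mob \<Longrightarrow> iso_in (mc M) (T I m) m (lu M m)"
  using ax[THEN conjunct2, THEN conjunct2, THEN conjunct2, THEN conjunct2, THEN conjunct2, THEN conjunct2, THEN conjunct1] by blast

lemma ru_nat: "M.arr f \<Longrightarrow> mcp (Ta f (mid I)) (ru M (mcod f)) = mcp (ru M (mdom f)) f"
  using m_ru M.hom_iff by metis

lemma asc_nat: "M.arr f \<Longrightarrow> M.arr g \<Longrightarrow> M.arr h \<Longrightarrow> 
  mcp (Ta (Ta f g) h) (asc M (mcod f) (mcod g) (mcod h)) = mcp (asc M (mdom f) (mdom g) (mdom h)) (Ta f (Ta g h))"
  using m_asc M.hom_iff by metis

lemma pentagon: "m\<in>mob \<Longrightarrow> n\<in>mob \<Longrightarrow> p\<in>mob \<Longrightarrow> q\<in>mob \<Longrightarrow>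
        mcp (asc M (T m n) p q) (asc M m n (T p q)) =
        mcp (mcp (Ta (asc M m n p) (mid q)) (asc M m (T n p) q)) (Ta (mid m) (asc M n p q))"
  using ax[THEN conjunct2, THEN conjunct2, THEN conjunct2, THEN conjunct2, THEN conjunct2, THEN conjunct2, THEN conjunct2, THEN conjunct2, THEN conjunct2, THEN conjunct2, THEN conjunct2, THEN conjunct2, THEN conjunct1] by blast

lemma triangle: "m\<in>mob \<Longrightarrow> n\<in>mob \<Longrightarrow> mcp (asc M m I n) (Ta (mid m) (lu M n)) = Ta (ru M m) (mid n)"
  using ax[THEN conjunct2, THEN conjunct2, THEN conjunct2, THEN conjunct2, THEN conjunct2, THEN conjunct2, THEN conjunct2, THEN conjunct2, THEN conjunct2, THEN conjunct2, THEN conjunct2, THEN conjunct2, THEN conjunct2] by blast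

lemma asc_arr[simp]: assumes "m \<in> mob" "n \<in> mob" "p \<in> mob"
  shows "M.arr (asc M m n p)" "mdom (asc M m n p) = T (T m n) p" "mcod (asc M m n p) = T m (T n p)"
  using M.iso_simps(1-3)[OF asc_iso[OF assms]] by auto
lemma ru_arr[simp]: assumes "m \<in> mob"
  shows "M.arr (ru M m)" "mdom (ru M m) = T m I" "mcod (ru M m) = m"
  using M.iso_simps(1-3)[OF ru_iso[OF assms]] by auto
lemma lu_arr[simp]: assumes "m \<in> mob"
  shows "M.arr (lu M m)" "mdom (lu M m) = T I m" "mcod (lu M m) = m"
  using M.iso_simps(1-3)[OF lu_iso[OF assms]] by auto

lemma Ta_faithful: assumes "M.arr f" "M.arr g" "mdom f = mdom g" "mcod f = mcod g" "Ta f (mid I) = Ta g (mid I)"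
  shows "f = g"
proof -
  have "mcp (ru M (mdom f)) f = mcp (ru M (mdom f)) g"
    using ru_nat[OF assms(1)] ru_nat[OF assms(2)] assms by simp
  then show ?thesis using M.iso_monoL[OF ru_iso[of "mdom f"]] assms by simp
qed

lemma Ta_comp_idl: "m \<in> mob \<Longrightarrow> M.arr g \<Longrightarrow> M.arr g' \<Longrightarrow> mcod g = mdom g' \<Longrightarrow>
   Ta (mid m) (mcp g g') = mcp (Ta (mid m) g) (Ta (mid m) g')"
  using Ta_comp[of "mid m" "mid m" g g'] by simp
lemma Ta_comp_idr: "m \<in> mob \<Longrightarrow> M.arr g \<Longrightarrow> M.arr g' \<Longrightarrow> mcod g = mdom g' \<Longrightarrow>
   Ta (mcp g g') (mid m) = mcp (Ta g (mid m)) (Ta g' (mid m))"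
  using Ta_comp[of g g' "mid m" "mid m"] by simp

lemma kelly: assumes m: "m \<in> mob" and n: "n \<in> mob"
  shows "ru M (T m n) = mcp (asc M m n I) (Ta (mid m) (ru M n))"
proof (rule Ta_faithful)
  let ?a = "asc M m n I"
  have nat1: "mcp (Ta (Ta (mid m) (mid n)) (lu M I)) ?a = mcp (asc M m n (T I I)) (Ta (mid m) (Ta (mid n) (lu M I)))"
    using asc_nat[of "mid m" "mid n" "lu M I"] m n by simp
  have nat2: "mcp (Ta (Ta (mid m) (ru M n)) (mid I)) ?a = mcp (asc M m (T n I) I) (Ta (mid m) (Ta (ru M n) (mid I)))"
    using asc_nat[of "mid m" "ru M n" "mid I"] m n by simp
  have "mcp (Ta (ru M (T m n)) (mid I)) ?a = mcp (asc M (T m n) I I) (mcp (Ta (mid (T m n)) (lu M I)) ?a)"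
    using m n by (simp add: triangle[of "T m n" I, symmetric])
  also have "\<dots> = mcp (mcp (asc M (T m n) I I) (asc M m n (T I I))) (Ta (mid m) (Ta (mid n) (lu M I)))"
    using nat1 m n by simp
  also have "\<dots> = mcp (mcp (mcp (Ta ?a (mid I)) (asc M m (T n I) I)) (Ta (mid m) (asc M n I I))) (Ta (mid m) (Ta (mid n) (lu M I)))"
    using pentagon[of m n I I] m n by simp
  also have "\<dots> = mcp (Ta ?a (mid I)) (mcp (asc M m (T n I) I) (Ta (mid m) (mcp (asc M n I I) (Ta (mid n) (lu M I)))))"
    using m n by (simp add: Ta_comp_idl)
  also have "\<dots> = mcp (Ta ?a (mid I)) (mcp (asc M m (T n I) I) (Ta (mid m) (Ta (ru M n) (mid I))))"
    using triangle[of n I] m n by simp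
  also have "\<dots> = mcp (Ta ?a (mid I)) (mcp (Ta (Ta (mid m) (ru M n)) (mid I)) ?a)"
    using nat2 by simp
  also have "\<dots> = mcp (Ta (mcp ?a (Ta (mid m) (ru M n))) (mid I)) ?a"
    using m n by (simp add: Ta_comp_idr)
  finally have eq: "mcp (Ta (ru M (T m n)) (mid I)) ?a = mcp (Ta (mcp ?a (Ta (mid m) (ru M n))) (mid I)) ?a" .
  show "Ta (ru M (T m n)) (mid I) = Ta (mcp ?a (Ta (mid m) (ru M n))) (mid I)"
    by (rule M.iso_epi[OF asc_iso[OF m n I_ob] _ _ _ _ eq]) (use m n in simp_all)
qed (use m n in simp_all)

end


lemma comp_iso_generic:
  fixes M :: "('m,'f) moncat" and C :: "('m,'f,'c,'g) actegory" and D :: "('m,'f,'d,'h) actegory"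
    and E :: "('m,'f,'e,'k) actegory"
    and P :: "('m,'c,'d,'x,'g,'h) tamb" and Q :: "('m,'d,'e,'y,'h,'k) tamb" and R :: "('m,'c,'e,'z,'g,'k) tamb"
    and F :: "'c \<Rightarrow> 'e \<Rightarrow> ('d \<times> 'x \<times> 'y) \<Rightarrow> 'z" and s :: "'c \<Rightarrow> 'e \<Rightarrow> 'z \<Rightarrow> ('d \<times> 'x \<times> 'y)"
  assumes catC: "cat_loc (ac C)" and catE: "cat_loc (ac E)"
  and actC: "\<And>m c. m \<in> c_ob (mc M) \<Longrightarrow> c \<in> c_ob (ac C) \<Longrightarrow> act C m c \<in> c_ob (ac C)"
  and actE: "\<And>m e. m \<in> c_ob (mc M) \<Longrightarrow> e \<in> c_ob (ac E) \<Longrightarrow> act E m e \<in> c_ob (ac E)"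
  and sub: "\<And>c e. c \<in> c_ob (ac C) \<Longrightarrow> e \<in> c_ob (ac E) \<Longrightarrow>
      coend_gen C D E P Q c e \<subseteq> coend_carrier D P Q c e \<times> coend_carrier D P Q c e"
  and inv: "\<And>c e u v. c \<in> c_ob (ac C) \<Longrightarrow> e \<in> c_ob (ac E) \<Longrightarrow> (u,v) \<in> coend_gen C D E P Q c e \<Longrightarrow>
      F c e u = F c e v"
  and FA: "\<And>c e t. c \<in> c_ob (ac C) \<Longrightarrow> e \<in> c_ob (ac E) \<Longrightarrow> t \<in> coend_carrier D P Q c e \<Longrightarrow> F c e t \<in> pobj R c e"
  and sB: "\<And>c e h. c \<in> c_ob (ac C) \<Longrightarrow> e \<in> c_ob (ac E) \<Longrightarrow> h \<in> pobj R c e \<Longrightarrow> s c e h \<in> coend_carrier D P Q c e"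
  and Fs: "\<And>c e h. c \<in> c_ob (ac C) \<Longrightarrow> e \<in> c_ob (ac E) \<Longrightarrow> h \<in> pobj R c e \<Longrightarrow> F c e (s c e h) = h"
  and sR: "\<And>c e t. c \<in> c_ob (ac C) \<Longrightarrow> e \<in> c_ob (ac E) \<Longrightarrow> t \<in> coend_carrier D P Q c e \<Longrightarrow>
      (t, s c e (F c e t)) \<in> coend_eqv C D E P Q c e"
  and nat: "\<And>c c' e e' f k d p q. f \<in> c_hom (ac C) c' c \<Longrightarrow> k \<in> c_hom (ac E) e e' \<Longrightarrow>
      (d,p,q) \<in> coend_carrier D P Q c e \<Longrightarrow>
      (d, pmap P f (c_id (ac D) d) p, pmap Q (c_id (ac D) d) k q) \<in> coend_carrier D P Q c' e' \<and>
      F c' e' (d, pmap P f (c_id (ac D) d) p, pmap Q (c_id (ac D) d) k q) = pmap R f k (F c e (d,p,q))"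
  and str: "\<And>m c e d p q. m \<in> c_ob (mc M) \<Longrightarrow> c \<in> c_ob (ac C) \<Longrightarrow> e \<in> c_ob (ac E) \<Longrightarrow>
      (d,p,q) \<in> coend_carrier D P Q c e \<Longrightarrow>
      (act D m d, pst P m c d p, pst Q m d e q) \<in> coend_carrier D P Q (act C m c) (act E m e) \<and>
      F (act C m c) (act E m e) (act D m d, pst P m c d p, pst Q m d e q) = pst R m c e (F c e (d,p,q))"
  shows "tamb_iso M C E (tamb_comp C D E P Q) R"
  unfolding tamb_iso_def
proof (intro exI[of _ "\<lambda>c e X. F c e (SOME t. t \<in> X)"] conjI ballI allI impI)
  fix c e assume c: "c \<in> c_ob (ac C)" and e: "e \<in> c_ob (ac E)"
  show "bij_betw (\<lambda>X. F c e (SOME t. t \<in> X)) (pobj (tamb_comp C D E P Q) c e) (pobj R c e)"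
    unfolding tamb_comp_def coend_eqv_def
    using quot_bij[where F="F c e" and gen="coend_gen C D E P Q c e" and A="coend_carrier D P Q c e"
        and B="pobj R c e" and s="s c e", OF inv[OF c e] sub[OF c e] FA[OF c e] sB[OF c e] Fs[OF c e]]
      sR[OF c e] unfolding coend_eqv_def by simp
next
  fix c c' e e' f k X
  assume f: "f \<in> c_hom (ac C) c' c" and k: "k \<in> c_hom (ac E) e e'" and X: "X \<in> pobj (tamb_comp C D E P Q) c e"
  have ob: "c \<in> c_ob (ac C)" "c' \<in> c_ob (ac C)" "e \<in> c_ob (ac E)" "e' \<in> c_ob (ac E)"
    using cat_loc.c1[OF catC f] cat_loc.c1[OF catE k] by auto
  have dc: "c_dom (ac C) f = c'" "c_cod (ac E) k = e'"
    using cat_loc.c2[OF catC f] cat_loc.c2[OF catE k] by auto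
  let ?t = "SOME t. t \<in> X"
  have X': "X \<in> coend_carrier D P Q c e // (coend_gen C D E P Q c e \<union> (coend_gen C D E P Q c e)\<inverse>)\<^sup>*"
    using X unfolding tamb_comp_def coend_eqv_def by simp
  have t: "?t \<in> coend_carrier D P Q c e"
    using quot_rep[where F="F c e", OF inv[OF ob(1,3)] sub[OF ob(1,3)] X'] .
  obtain d p q where dpq: "?t = (d,p,q)" by (cases ?t) auto
  let ?G = "(d, pmap P f (c_id (ac D) d) p, pmap Q (c_id (ac D) d) k q)"
  have n: "?G \<in> coend_carrier D P Q c' e'" "F c' e' ?G = pmap R f k (F c e (d,p,q))"
    using nat[OF f k] t dpq by auto
  have "pmap (tamb_comp C D E P Q) f k X = (coend_gen C D E P Q c' e' \<union> (coend_gen C D E P Q c' e')\<inverse>)\<^sup>* `` {?G}"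
    unfolding tamb_comp_def coend_eqv_def using dpq dc by simp
  then have "F c' e' (SOME t. t \<in> pmap (tamb_comp C D E P Q) f k X) = F c' e' ?G"
    using quot_some[where F="F c' e'", OF inv[OF ob(2,4)] sub[OF ob(2,4)] n(1)] by simp
  then show "F c' e' (SOME t. t \<in> pmap (tamb_comp C D E P Q) f k X) = pmap R f k (F c e (SOME t. t \<in> X))"
    using n(2) dpq by simp
next
  fix m c e X
  assume m: "m \<in> c_ob (mc M)" and c: "c \<in> c_ob (ac C)" and e: "e \<in> c_ob (ac E)" and X: "X \<in> pobj (tamb_comp C D E P Q) c e"
  have ob: "act C m c \<in> c_ob (ac C)" "act E m e \<in> c_ob (ac E)" using actC[OF m c] actE[OF m e] .
  let ?t = "SOME t. t \<in> X"
  have X': "X \<in> coend_carrier D P Q c e // (coend_gen C D E P Q c e \<union> (coend_gen C D E P Q c e)\<inverse>)\<^sup>*"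
    using X unfolding tamb_comp_def coend_eqv_def by simp
  have t: "?t \<in> coend_carrier D P Q c e"
    using quot_rep[where F="F c e", OF inv[OF c e] sub[OF c e] X'] .
  obtain d p q where dpq: "?t = (d,p,q)" by (cases ?t) auto
  let ?G = "(act D m d, pst P m c d p, pst Q m d e q)"
  have n: "?G \<in> coend_carrier D P Q (act C m c) (act E m e)" "F (act C m c) (act E m e) ?G = pst R m c e (F c e (d,p,q))"
    using str[OF m c e] t dpq by auto
  have "pst (tamb_comp C D E P Q) m c e X = (coend_gen C D E P Q (act C m c) (act E m e) \<union> (coend_gen C D E P Q (act C m c) (act E m e))\<inverse>)\<^sup>* `` {?G}"
    unfolding tamb_comp_def coend_eqv_def using dpq by simp
  then have "F (act C m c) (act E m e) (SOME t. t \<in> pst (tamb_comp C D E P Q) m c e X) = F (act C m c) (act E m e) ?G"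
    using quot_some[where F="F (act C m c) (act E m e)", OF inv[OF ob] sub[OF ob] n(1)] by simp
  then show "F (act C m c) (act E m e) (SOME t. t \<in> pst (tamb_comp C D E P Q) m c e X) = pst R m c e (F c e (SOME t. t \<in> X))"
    using n(2) dpq by simp
qed



context mon_loc begin

lemma part1R: "tamb_iso M (self_act M) (self_act M) (R_tamb M (self_act M) (mI M)) (hom_tamb M (self_act M))"
  unfolding tamb_iso_def R_tamb_def hom_tamb_def self_act_def
proof (simp, intro exI[of _ "\<lambda>c n h. mcp h (ru M n)"] conjI ballI allI impI)
  fix c n assume c: "c \<in> mob" and n: "n \<in> mob"
  show "bij_betw (\<lambda>h. mcp h (ru M n)) (c_hom (mc M) c (T n I)) (c_hom (mc M) c n)"
    by (rule bij_betw_byWitness[where f'="\<lambda>h. mcp h (inv_in (mc M) (T n I) n (ru M n))"])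
       (use c n in \<open>auto simp: M.hom_iff\<close>)
next
  fix c c' d d' f g x
  assume f: "f \<in> c_hom (mc M) c' c" and g: "g \<in> c_hom (mc M) d d'" and x: "x \<in> c_hom (mc M) c (T d I)"
  show "mcp (mcp (mcp f x) (Ta g (mid I))) (ru M d') = mcp (mcp f (mcp x (ru M d))) g"
    using f g x ru_nat[of g] by (auto simp: M.hom_iff)
next
  fix m c n x assume m: "m \<in> mob" and c: "c \<in> mob" and n: "n \<in> mob" and x: "x \<in> c_hom (mc M) c (T n I)"
  show "mcp (mcp (Ta (mid m) x) (inv_in (mc M) (T (T m n) I) (T m (T n I)) (asc M m n I))) (ru M (T m n)) =
       Ta (mid m) (mcp x (ru M n))"
    using m c n x by (auto simp: M.hom_iff kelly Ta_comp_idl)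
qed

lemma kelly_inv: assumes m: "m \<in> mob" and n: "n \<in> mob"
  shows "mcp (inv_in (mc M) (T (T m n) I) (T m n) (ru M (T m n))) (asc M m n I) = Ta (mid m) (inv_in (mc M) (T n I) n (ru M n))"
proof -
  let ?i = "inv_in (mc M) (T (T m n) I) (T m n) (ru M (T m n))"
  let ?j = "inv_in (mc M) (T n I) n (ru M n)"
  have e: "mcp (ru M (T m n)) (Ta (mid m) ?j) = mcp (asc M m n I) (Ta (mid m) (mcp (ru M n) ?j))"
    using m n by (simp add: kelly flip: Ta_comp_idl)
  have "Ta (mid m) ?j = mcp (mcp ?i (ru M (T m n))) (Ta (mid m) ?j)"
    using m n by simp
  also have "\<dots> = mcp ?i (mcp (ru M (T m n)) (Ta (mid m) ?j))"
    using m n by simp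
  also have "\<dots> = mcp ?i (mcp (asc M m n I) (Ta (mid m) (mcp (ru M n) ?j)))"
    using e by simp
  also have "\<dots> = mcp ?i (asc M m n I)"
    using m n by simp
  finally show ?thesis by simp
qed

lemma ru_inv_nat: assumes u: "u \<in> c_hom (mc M) n' n"
  shows "mcp (inv_in (mc M) (T n' I) n' (ru M n')) (Ta u (mid I)) = mcp u (inv_in (mc M) (T n I) n (ru M n))"
proof -
  have a: "M.arr u" "mdom u = n'" "mcod u = n" using u M.hom_iff by auto
  then have ob: "n \<in> mob" "n' \<in> mob" using M.arr_ob by blast+
  let ?i = "inv_in (mc M) (T n' I) n' (ru M n')"
  let ?j = "inv_in (mc M) (T n I) n (ru M n)"
  have "mcp ?i (Ta u (mid I)) = mcp ?i (mcp (mcp (Ta u (mid I)) (ru M n)) ?j)"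
    using a ob by simp
  also have "\<dots> = mcp ?i (mcp (mcp (ru M n') u) ?j)"
    using ru_nat[OF a(1)] a by simp
  also have "\<dots> = mcp u ?j" using a ob by simp
  finally show ?thesis .
qed

lemma part1L: "tamb_iso M (self_act M) (self_act M) (L_tamb M (self_act M) (mI M)) (hom_tamb M (self_act M))"
  unfolding tamb_iso_def L_tamb_def hom_tamb_def self_act_def
proof (simp, intro exI[of _ "\<lambda>n c h. mcp (inv_in (mc M) (T n I) n (ru M n)) h"] conjI ballI allI impI)
  fix c n assume c: "c \<in> mob" and n: "n \<in> mob"
  show "bij_betw (\<lambda>h. mcp (inv_in (mc M) (T n I) n (ru M n)) h) (c_hom (mc M) (T n I) c) (c_hom (mc M) n c)"
    by (rule bij_betw_byWitness[where f'="\<lambda>h. mcp (ru M n) h"])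
       (use c n in \<open>auto simp: M.hom_iff\<close>)
next
  fix c c' d d' f g x
  assume f: "f \<in> c_hom (mc M) c' c" and g: "g \<in> c_hom (mc M) d d'" and x: "x \<in> c_hom (mc M) (T c I) d"
  have fa: "M.arr f" "mdom f = c'" "mcod f = c" using f M.hom_iff by auto
  then have ob: "c \<in> mob" "c' \<in> mob" using M.arr_ob by blast+
  have "mcp (inv_in (mc M) (T c' I) c' (ru M c')) (mcp (mcp (Ta f (mid I)) x) g)
      = mcp (mcp (inv_in (mc M) (T c' I) c' (ru M c')) (Ta f (mid I))) (mcp x g)"
    using fa ob g x by (simp add: M.hom_iff)
  also have "\<dots> = mcp (mcp f (inv_in (mc M) (T c I) c (ru M c))) (mcp x g)"
    using ru_inv_nat[OF f] by simp
  finally show "mcp (inv_in (mc M) (T c' I) c' (ru M c')) (mcp (mcp (Ta f (mid I)) x) g) =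
       mcp (mcp f (mcp (inv_in (mc M) (T c I) c (ru M c)) x)) g"
    using fa ob g x by (simp add: M.hom_iff)
next
  fix m c n x assume m: "m \<in> mob" and c: "c \<in> mob" and n: "n \<in> mob" and x: "x \<in> c_hom (mc M) (T c I) n"
  have "mcp (inv_in (mc M) (T (T m c) I) (T m c) (ru M (T m c))) (mcp (asc M m c I) (Ta (mid m) x))
     = mcp (mcp (inv_in (mc M) (T (T m c) I) (T m c) (ru M (T m c))) (asc M m c I)) (Ta (mid m) x)"
    using m c n x by (simp add: M.hom_iff)
  also have "\<dots> = mcp (Ta (mid m) (inv_in (mc M) (T c I) c (ru M c))) (Ta (mid m) x)"
    using kelly_inv[OF m c] by simp
  finally show "mcp (inv_in (mc M) (T (T m c) I) (T m c) (ru M (T m c))) (mcp (asc M m c I) (Ta (mid m) x)) =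
       Ta (mid m) (mcp (inv_in (mc M) (T c I) c (ru M c)) x)"
    using m c n x by (simp add: M.hom_iff Ta_comp_idl)
qed

end


locale act_loc = fixes M :: "('m,'f) moncat" and C :: "('m,'f,'c,'g) actegory"
  assumes actg: "is_actegory M C"
begin

lemmas axa = actg[unfolded is_actegory_def Let_def]

sublocale mon_loc M using axa[THEN conjunct1] by (simp add: mon_loc_def)
sublocale A: cat_loc "ac C" using axa[THEN conjunct2, THEN conjunct1] by (simp add: cat_loc_def)

lemma act_ob[simp]: "m \<in> mob \<Longrightarrow> x \<in> c_ob (ac C) \<Longrightarrow> act C m x \<in> c_ob (ac C)"
  using axa[THEN conjunct2, THEN conjunct2, THEN conjunct1] by blast
lemma a3: "u \<in> c_hom (mc M) m m' \<Longrightarrow> h \<in> c_hom (ac C) x x' \<Longrightarrow> acta C u h \<in> c_hom (ac C) (act C m x) (act C m' x')"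
  using axa[THEN conjunct2, THEN conjunct2, THEN conjunct2, THEN conjunct1] by blast
lemma Oa_id[simp]: "m \<in> mob \<Longrightarrow> x \<in> c_ob (ac C) \<Longrightarrow> acta C (mid m) (c_id (ac C) x) = c_id (ac C) (act C m x)"
  using axa[THEN conjunct2, THEN conjunct2, THEN conjunct2, THEN conjunct2, THEN conjunct1] by blast
lemma a5: "u \<in> c_hom (mc M) m m' \<Longrightarrow> u' \<in> c_hom (mc M) m' m'' \<Longrightarrow>
        h \<in> c_hom (ac C) x x' \<Longrightarrow> h' \<in> c_hom (ac C) x' x'' \<Longrightarrow>
        acta C (mcp u u') (c_comp (ac C) h h') = c_comp (ac C) (acta C u h) (acta C u' h')"
  using axa[THEN conjunct2, THEN conjunct2, THEN conjunct2, THEN conjunct2, THEN conjunct2, THEN conjunct1] by blast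
lemma aas_iso[simp]: "m \<in> mob \<Longrightarrow> n \<in> mob \<Longrightarrow> x \<in> c_ob (ac C) \<Longrightarrow>
    iso_in (ac C) (act C (T m n) x) (act C m (act C n x)) (aas C m n x)"
  using axa[THEN conjunct2, THEN conjunct2, THEN conjunct2, THEN conjunct2, THEN conjunct2, THEN conjunct2,
      THEN conjunct2, THEN conjunct2, THEN conjunct1] by blast
lemma a9: "u \<in> c_hom (mc M) m m' \<Longrightarrow> v \<in> c_hom (mc M) n n' \<Longrightarrow> h \<in> c_hom (ac C) x x' \<Longrightarrow>
        c_comp (ac C) (acta C (Ta u v) h) (aas C m' n' x') = c_comp (ac C) (aas C m n x) (acta C u (acta C v h))"
  using axa[THEN conjunct2, THEN conjunct2, THEN conjunct2, THEN conjunct2, THEN conjunct2, THEN conjunct2,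
      THEN conjunct2, THEN conjunct2, THEN conjunct2, THEN conjunct1] by blast
lemma a10: "m\<in>mob \<Longrightarrow> n\<in>mob \<Longrightarrow> p\<in>mob \<Longrightarrow> x\<in>c_ob (ac C) \<Longrightarrow>
        c_comp (ac C) (aas C (T m n) p x) (aas C m n (act C p x)) =
        c_comp (ac C) (c_comp (ac C) (acta C (asc M m n p) (c_id (ac C) x)) (aas C m (T n p) x)) (acta C (mid m) (aas C n p x))"
  using axa[THEN conjunct2, THEN conjunct2, THEN conjunct2, THEN conjunct2, THEN conjunct2, THEN conjunct2,
      THEN conjunct2, THEN conjunct2, THEN conjunct2, THEN conjunct2, THEN conjunct1] by blast

abbreviation "acp \<equiv> c_comp (ac C)"
abbreviation "aid \<equiv> c_id (ac C)"
abbreviation "Oa \<equiv> acta C"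
abbreviation "Ac \<equiv> act C"

lemma Oa_simps[simp]: "M.arr u \<Longrightarrow> A.arr h \<Longrightarrow> A.arr (Oa u h)"
  "M.arr u \<Longrightarrow> A.arr h \<Longrightarrow> c_dom (ac C) (Oa u h) = Ac (mdom u) (c_dom (ac C) h)"
  "M.arr u \<Longrightarrow> A.arr h \<Longrightarrow> c_cod (ac C) (Oa u h) = Ac (mcod u) (c_cod (ac C) h)"
  using a3 M.hom_iff A.hom_iff by metis+

lemma aas_arr[simp]: assumes "m \<in> mob" "n \<in> mob" "x \<in> c_ob (ac C)"
  shows "A.arr (aas C m n x)" "c_dom (ac C) (aas C m n x) = Ac (T m n) x" "c_cod (ac C) (aas C m n x) = Ac m (Ac n x)"
  using A.iso_simps(1-3)[OF aas_iso[OF assms]] by auto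

lemma Oa_comp: "M.arr u \<Longrightarrow> M.arr u' \<Longrightarrow> A.arr h \<Longrightarrow> A.arr h' \<Longrightarrow> mcod u = mdom u' \<Longrightarrow> c_cod (ac C) h = c_dom (ac C) h' \<Longrightarrow>
   Oa (mcp u u') (acp h h') = acp (Oa u h) (Oa u' h')"
  using a5 M.hom_iff A.hom_iff by metis

lemma Oa_comp_idx: "x \<in> c_ob (ac C) \<Longrightarrow> M.arr u \<Longrightarrow> M.arr u' \<Longrightarrow> mcod u = mdom u' \<Longrightarrow>
   Oa (mcp u u') (aid x) = acp (Oa u (aid x)) (Oa u' (aid x))"
  using Oa_comp[of u u' "aid x" "aid x"] by simp
lemma Oa_comp_idm: "m \<in> mob \<Longrightarrow> A.arr h \<Longrightarrow> A.arr h' \<Longrightarrow> c_cod (ac C) h = c_dom (ac C) h' \<Longrightarrow>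
   Oa (mid m) (acp h h') = acp (Oa (mid m) h) (Oa (mid m) h')"
  using Oa_comp[of "mid m" "mid m" h h'] by simp

lemma aas_nat: "M.arr u \<Longrightarrow> M.arr v \<Longrightarrow> A.arr h \<Longrightarrow>
   acp (Oa (Ta u v) h) (aas C (mcod u) (mcod v) (c_cod (ac C) h)) = acp (aas C (mdom u) (mdom v) (c_dom (ac C) h)) (Oa u (Oa v h))"
  using a9 M.hom_iff A.hom_iff by metis

lemma aas_inv_nat: assumes u: "M.arr u" and v: "M.arr v" and h: "A.arr h"
  shows "acp (inv_in (ac C) (Ac (T (mdom u) (mdom v)) (c_dom (ac C) h)) (Ac (mdom u) (Ac (mdom v) (c_dom (ac C) h))) (aas C (mdom u) (mdom v) (c_dom (ac C) h))) (Oa (Ta u v) h)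
   = acp (Oa u (Oa v h)) (inv_in (ac C) (Ac (T (mcod u) (mcod v)) (c_cod (ac C) h)) (Ac (mcod u) (Ac (mcod v) (c_cod (ac C) h))) (aas C (mcod u) (mcod v) (c_cod (ac C) h)))"
  (is "acp ?i ?f = acp ?g ?j")
proof -
  have ob: "mdom u \<in> mob" "mdom v \<in> mob" "c_dom (ac C) h \<in> c_ob (ac C)"
           "mcod u \<in> mob" "mcod v \<in> mob" "c_cod (ac C) h \<in> c_ob (ac C)" using u v h by auto
  have "acp ?i ?f = acp ?i (acp (acp ?f (aas C (mcod u) (mcod v) (c_cod (ac C) h))) ?j)"
    using u v h ob by simp
  also have "\<dots> = acp ?i (acp (acp (aas C (mdom u) (mdom v) (c_dom (ac C) h)) ?g) ?j)"
    using aas_nat[OF u v h] by simp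
  also have "\<dots> = acp ?g ?j" using u v h ob by simp
  finally show ?thesis .
qed

lemma pent_norm: "m\<in>mob \<Longrightarrow> n\<in>mob \<Longrightarrow> p\<in>mob \<Longrightarrow> x\<in>c_ob (ac C) \<Longrightarrow>
        acp (aas C (T m n) p x) (aas C m n (Ac p x)) =
        acp (Oa (asc M m n p) (aid x)) (acp (aas C m (T n p) x) (Oa (mid m) (aas C n p x)))"
  using a10 by simp

end


lemma self_act_simps[simp]: "ac (self_act M) = mc M" "act (self_act M) = tn M" "acta (self_act M) = tna M"
  "aas (self_act M) = asc M" "alu (self_act M) = lu M"
  by (simp_all add: self_act_def)

lemma R_simps[simp]: "pobj (R_tamb M C x) = (\<lambda>c n. c_hom (ac C) c (act C n x))"
  "pmap (R_tamb M C x) = (\<lambda>f u h. c_comp (ac C) (c_comp (ac C) f h) (acta C u (c_id (ac C) x)))"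
  "pst (R_tamb M C x) = (\<lambda>m c n h. c_comp (ac C) (acta C (c_id (mc M) m) h)
               (inv_in (ac C) (act C (tn M m n) x) (act C m (act C n x)) (aas C m n x)))"
  by (simp_all add: R_tamb_def)

lemma L_simps[simp]: "pobj (L_tamb M C x) = (\<lambda>n c. c_hom (ac C) (act C n x) c)"
  "pmap (L_tamb M C x) = (\<lambda>u f h. c_comp (ac C) (c_comp (ac C) (acta C u (c_id (ac C) x)) h) f)"
  "pst (L_tamb M C x) = (\<lambda>m n c h. c_comp (ac C) (aas C m n x) (acta C (c_id (mc M) m) h))"
  by (simp_all add: L_tamb_def)

context act_loc begin

lemma Oa_iso_cancel[simp]: assumes "iso_in (mc M) a b w" "x \<in> c_ob (ac C)"
  shows "A.arr z \<Longrightarrow> c_dom (ac C) z = Ac b x \<Longrightarrow> acp (Oa (inv_in (mc M) a b w) (aid x)) (acp (Oa w (aid x)) z) = z"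
        "A.arr z \<Longrightarrow> c_dom (ac C) z = Ac a x \<Longrightarrow> acp (Oa w (aid x)) (acp (Oa (inv_in (mc M) a b w) (aid x)) z) = z"
proof -
  have ab: "a \<in> mob" "b \<in> mob" using assms(1) M.iso_simps(1-3)[OF assms(1)] M.arr_ob by metis+
  show "A.arr z \<Longrightarrow> c_dom (ac C) z = Ac b x \<Longrightarrow> acp (Oa (inv_in (mc M) a b w) (aid x)) (acp (Oa w (aid x)) z) = z"
    using assms ab by (simp flip: A.assoc Oa_comp_idx)
  show "A.arr z \<Longrightarrow> c_dom (ac C) z = Ac a x \<Longrightarrow> acp (Oa w (aid x)) (acp (Oa (inv_in (mc M) a b w) (aid x)) z) = z"
    using assms ab by (simp flip: A.assoc Oa_comp_idx)
qed

lemma Oam_iso_cancel[simp]: assumes "iso_in (ac C) a b w" "m \<in> mob"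
  shows "A.arr z \<Longrightarrow> c_dom (ac C) z = Ac m b \<Longrightarrow> acp (Oa (mid m) (inv_in (ac C) a b w)) (acp (Oa (mid m) w) z) = z"
        "A.arr z \<Longrightarrow> c_dom (ac C) z = Ac m a \<Longrightarrow> acp (Oa (mid m) w) (acp (Oa (mid m) (inv_in (ac C) a b w)) z) = z"
proof -
  have ab: "a \<in> c_ob (ac C)" "b \<in> c_ob (ac C)" using assms(1) A.iso_simps(1-3)[OF assms(1)] A.arr_ob by metis+
  show "A.arr z \<Longrightarrow> c_dom (ac C) z = Ac m b \<Longrightarrow> acp (Oa (mid m) (inv_in (ac C) a b w)) (acp (Oa (mid m) w) z) = z"
    using assms ab by (simp flip: A.assoc Oa_comp_idm)
  show "A.arr z \<Longrightarrow> c_dom (ac C) z = Ac m a \<Longrightarrow> acp (Oa (mid m) w) (acp (Oa (mid m) (inv_in (ac C) a b w)) z) = z"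
    using assms ab by (simp flip: A.assoc Oa_comp_idm)
qed

lemma pent2: assumes m': "m' \<in> mob" and e: "e \<in> mob" and m: "m \<in> mob" and x: "x \<in> c_ob (ac C)"
  shows "acp (Oa (inv_in (mc M) (T (T m' e) m) (T m' (T e m)) (asc M m' e m)) (aid x)) (aas C (T m' e) m x) =
    acp (aas C m' (T e m) x) (acp (Oa (mid m') (aas C e m x)) (inv_in (ac C) (Ac (T m' e) (Ac m x)) (Ac m' (Ac e (Ac m x))) (aas C m' e (Ac m x))))"
proof -
  let ?ia = "inv_in (mc M) (T (T m' e) m) (T m' (T e m)) (asc M m' e m)"
  let ?J = "inv_in (ac C) (Ac (T m' e) (Ac m x)) (Ac m' (Ac e (Ac m x))) (aas C m' e (Ac m x))"
  have "acp (Oa ?ia (aid x)) (aas C (T m' e) m x) = acp (Oa ?ia (aid x)) (acp (acp (aas C (T m' e) m x) (aas C m' e (Ac m x))) ?J)"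
    using assms by simp
  also have "\<dots> = acp (Oa ?ia (aid x)) (acp (Oa (asc M m' e m) (aid x)) (acp (aas C m' (T e m) x) (acp (Oa (mid m') (aas C e m x)) ?J)))"
    using assms by (simp add: pent_norm)
  also have "\<dots> = acp (aas C m' (T e m) x) (acp (Oa (mid m') (aas C e m x)) ?J)"
    using assms by simp
  finally show ?thesis .
qed

lemma pent3: assumes m': "m' \<in> mob" and n: "n \<in> mob" and m: "m \<in> mob" and x: "x \<in> c_ob (ac C)"
  shows "acp (inv_in (ac C) (Ac (T (T m' n) m) x) (Ac (T m' n) (Ac m x)) (aas C (T m' n) m x)) (acp (Oa (asc M m' n m) (aid x)) (aas C m' (T n m) x))
     = acp (aas C m' n (Ac m x)) (Oa (mid m') (inv_in (ac C) (Ac (T n m) x) (Ac n (Ac m x)) (aas C n m x)))"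
proof -
  let ?I1 = "inv_in (ac C) (Ac (T (T m' n) m) x) (Ac (T m' n) (Ac m x)) (aas C (T m' n) m x)"
  let ?I2 = "inv_in (ac C) (Ac (T n m) x) (Ac n (Ac m x)) (aas C n m x)"
  have "acp (aas C m' n (Ac m x)) (Oa (mid m') ?I2) = acp ?I1 (acp (acp (aas C (T m' n) m x) (aas C m' n (Ac m x))) (Oa (mid m') ?I2))"
    using assms by simp
  also have "\<dots> = acp ?I1 (acp (Oa (asc M m' n m) (aid x)) (acp (aas C m' (T n m) x) (acp (Oa (mid m') (aas C n m x)) (Oa (mid m') ?I2))))"
    using assms by (simp add: pent_norm)
  also have "\<dots> = acp ?I1 (acp (Oa (asc M m' n m) (aid x)) (aas C m' (T n m) x))"
    using assms by (simp flip: Oa_comp_idm)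
  finally show ?thesis by simp
qed

end


context act_loc begin

lemma part2: assumes x: "x \<in> c_ob (ac C)" and m: "m \<in> mob"
  shows "tamb_iso M C (self_act M)
              (tamb_comp C (self_act M) (self_act M) (R_tamb M C x) (R_tamb M (self_act M) m))
              (R_tamb M C (act C m x))"
proof (rule comp_iso_generic[where
      F="\<lambda>c e (d,p,q). acp (acp p (Oa q (aid x))) (aas C e m x)" and
      s="\<lambda>c e h. (T e m, acp h (inv_in (ac C) (Ac (T e m) x) (Ac e (Ac m x)) (aas C e m x)), mid (T e m))"])
  show "cat_loc (ac C)" by unfold_locales
  show "cat_loc (ac (self_act M))" by simp unfold_locales
  show "\<And>m c. m \<in> mob \<Longrightarrow> c \<in> c_ob (ac C) \<Longrightarrow> Ac m c \<in> c_ob (ac C)" by simp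
  show "\<And>m e. m \<in> mob \<Longrightarrow> e \<in> c_ob (ac (self_act M)) \<Longrightarrow> act (self_act M) m e \<in> c_ob (ac (self_act M))" by simp
  show "coend_gen C (self_act M) (self_act M) (R_tamb M C x) (R_tamb M (self_act M) m) c e
     \<subseteq> coend_carrier (self_act M) (R_tamb M C x) (R_tamb M (self_act M) m) c e \<times> coend_carrier (self_act M) (R_tamb M C x) (R_tamb M (self_act M) m) c e"
    if "c \<in> c_ob (ac C)" "e \<in> c_ob (ac (self_act M))" for c e
    using that x m by (auto simp: coend_gen_def coend_carrier_def A.hom_iff M.hom_iff)
next
  fix c e u v assume c: "c \<in> c_ob (ac C)" and e: "e \<in> c_ob (ac (self_act M))"
    and uv: "(u,v) \<in> coend_gen C (self_act M) (self_act M) (R_tamb M C x) (R_tamb M (self_act M) m) c e"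
  then obtain d d' g p q where u: "u = (d', acp (acp (aid c) p) (Oa g (aid x)), q)"
    and v: "v = (d, p, mcp (mcp g q) (Ta (mid e) (mid m)))" and g: "g \<in> c_hom (mc M) d d'"
    and p: "p \<in> c_hom (ac C) c (Ac d x)" and q: "q \<in> c_hom (mc M) d' (T e m)"
    by (auto simp: coend_gen_def)
  show "(case u of (d,p,q) \<Rightarrow> acp (acp p (Oa q (aid x))) (aas C e m x)) = (case v of (d,p,q) \<Rightarrow> acp (acp p (Oa q (aid x))) (aas C e m x))"
    using u v g p q c e x m by (simp add: A.hom_iff M.hom_iff Oa_comp_idx)
next
  fix c e t assume c: "c \<in> c_ob (ac C)" and e: "e \<in> c_ob (ac (self_act M))"
    and t: "t \<in> coend_carrier (self_act M) (R_tamb M C x) (R_tamb M (self_act M) m) c e"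
  then show "(case t of (d,p,q) \<Rightarrow> acp (acp p (Oa q (aid x))) (aas C e m x)) \<in> pobj (R_tamb M C (Ac m x)) c e"
    using x m by (auto simp: coend_carrier_def A.hom_iff M.hom_iff)
next
  fix c e h assume c: "c \<in> c_ob (ac C)" and e: "e \<in> c_ob (ac (self_act M))"
    and h: "h \<in> pobj (R_tamb M C (Ac m x)) c e"
  then show "(T e m, acp h (inv_in (ac C) (Ac (T e m) x) (Ac e (Ac m x)) (aas C e m x)), mid (T e m))
       \<in> coend_carrier (self_act M) (R_tamb M C x) (R_tamb M (self_act M) m) c e"
    using x m by (auto simp: coend_carrier_def A.hom_iff M.hom_iff)
  show "(case (T e m, acp h (inv_in (ac C) (Ac (T e m) x) (Ac e (Ac m x)) (aas C e m x)), mid (T e m)) of (d,p,q) \<Rightarrow> acp (acp p (Oa q (aid x))) (aas C e m x)) = h"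
    using c e h x m by (auto simp: A.hom_iff M.hom_iff)
next
  fix c e t assume c: "c \<in> c_ob (ac C)" and e: "e \<in> c_ob (ac (self_act M))"
    and t: "t \<in> coend_carrier (self_act M) (R_tamb M C x) (R_tamb M (self_act M) m) c e"
  then obtain d p q where tt: "t = (d,p,q)" and d: "d \<in> mob" and p: "p \<in> c_hom (ac C) c (Ac d x)"
    and q: "q \<in> c_hom (mc M) d (T e m)" by (auto simp: coend_carrier_def)
  let ?gen = "coend_gen C (self_act M) (self_act M) (R_tamb M C x) (R_tamb M (self_act M) m) c e"
  have "((T e m, acp (acp (aid c) p) (Oa q (aid x)), mid (T e m)), (d, p, mcp (mcp q (mid (T e m))) (Ta (mid e) (mid m)))) \<in> ?gen"
    unfolding coend_gen_def using d p q e m c x by (simp add: M.hom_iff) (rule exI[of _ q], simp)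
  moreover have "(T e m, acp (acp (aid c) p) (Oa q (aid x)), mid (T e m)) = 
    (T e m, acp (case t of (d,p,q) \<Rightarrow> acp (acp p (Oa q (aid x))) (aas C e m x)) (inv_in (ac C) (Ac (T e m) x) (Ac e (Ac m x)) (aas C e m x)), mid (T e m))"
    using tt d p q e m c x by (simp add: M.hom_iff A.hom_iff)
  moreover have "(d, p, mcp (mcp q (mid (T e m))) (Ta (mid e) (mid m))) = t"
    using tt d p q e m c x by (simp add: M.hom_iff A.hom_iff)
  ultimately show "(t, (\<lambda>c e h. (T e m, acp h (inv_in (ac C) (Ac (T e m) x) (Ac e (Ac m x)) (aas C e m x)), mid (T e m))) c e
       ((\<lambda>c e (d,p,q). acp (acp p (Oa q (aid x))) (aas C e m x)) c e t))
     \<in> coend_eqv C (self_act M) (self_act M) (R_tamb M C x) (R_tamb M (self_act M) m) c e"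
    unfolding coend_eqv_def by (metis (no_types, lifting) UnI2 converse_iff r_into_rtrancl)
next
  fix c c' e e' f k d p q
  assume f: "f \<in> c_hom (ac C) c' c" and k: "k \<in> c_hom (ac (self_act M)) e e'"
    and t: "(d,p,q) \<in> coend_carrier (self_act M) (R_tamb M C x) (R_tamb M (self_act M) m) c e"
  have d: "d \<in> mob" and p: "p \<in> c_hom (ac C) c (Ac d x)" and q: "q \<in> c_hom (mc M) d (T e m)"
    using t by (auto simp: coend_carrier_def)
  have k': "M.arr k" "mdom k = e" "mcod k = e'" using k M.hom_iff by auto
  have an: "acp (Oa (Ta k (mid m)) (aid x)) (aas C e' m x) = acp (aas C e m x) (Oa k (aid (Ac m x)))"
    using aas_nat[of k "mid m" "aid x"] k' x m by simp
  show "(d, pmap (R_tamb M C x) f (c_id (ac (self_act M)) d) p, pmap (R_tamb M (self_act M) m) (c_id (ac (self_act M)) d) k q)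
       \<in> coend_carrier (self_act M) (R_tamb M C x) (R_tamb M (self_act M) m) c' e' \<and>
       (case (d, pmap (R_tamb M C x) f (c_id (ac (self_act M)) d) p, pmap (R_tamb M (self_act M) m) (c_id (ac (self_act M)) d) k q)
         of (d,p,q) \<Rightarrow> acp (acp p (Oa q (aid x))) (aas C e' m x))
       = pmap (R_tamb M C (Ac m x)) f k (case (d,p,q) of (d,p,q) \<Rightarrow> acp (acp p (Oa q (aid x))) (aas C e m x))"
    using f k' d p q x m an by (auto simp: coend_carrier_def A.hom_iff M.hom_iff Oa_comp_idx)
next
  fix m' c e d p q
  assume m': "m' \<in> mob" and c: "c \<in> c_ob (ac C)" and e: "e \<in> c_ob (ac (self_act M))"
    and t: "(d,p,q) \<in> coend_carrier (self_act M) (R_tamb M C x) (R_tamb M (self_act M) m) c e"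
  have d: "d \<in> mob" and p: "A.arr p" "c_dom (ac C) p = c" "c_cod (ac C) p = Ac d x"
    and q: "M.arr q" "mdom q = d" "mcod q = T e m"
    using t by (auto simp: coend_carrier_def A.hom_iff M.hom_iff)
  have e': "e \<in> mob" using e by simp
  let ?I1 = "inv_in (ac C) (Ac (T m' d) x) (Ac m' (Ac d x)) (aas C m' d x)"
  let ?I2 = "inv_in (ac C) (Ac (T m' (T e m)) x) (Ac m' (Ac (T e m) x)) (aas C m' (T e m) x)"
  let ?ia = "inv_in (mc M) (T (T m' e) m) (T m' (T e m)) (asc M m' e m)"
  let ?J = "inv_in (ac C) (Ac (T m' e) (Ac m x)) (Ac m' (Ac e (Ac m x))) (aas C m' e (Ac m x))"
  have k1: "acp ?I1 (Oa (Ta (mid m') q) (aid x)) = acp (Oa (mid m') (Oa q (aid x))) ?I2"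
    using aas_inv_nat[of "mid m'" q "aid x"] m' q x d by simp
  have "(case (act (self_act M) m' d, pst (R_tamb M C x) m' c d p, pst (R_tamb M (self_act M) m) m' d e q) of
          (d,p,q) \<Rightarrow> acp (acp p (Oa q (aid x))) (aas C (act (self_act M) m' e) m x))
     = acp (Oa (mid m') p) (acp (acp ?I1 (Oa (Ta (mid m') q) (aid x))) (acp (Oa ?ia (aid x)) (aas C (T m' e) m x)))"
    using m' d p q x m e' by (simp add: Oa_comp_idx)
  also have "\<dots> = acp (Oa (mid m') p) (acp (acp (Oa (mid m') (Oa q (aid x))) ?I2)
       (acp (aas C m' (T e m) x) (acp (Oa (mid m') (aas C e m x)) ?J)))"
    by (simp only: k1 pent2[OF m' e' m x])
  also have "\<dots> = pst (R_tamb M C (Ac m x)) m' c e (case (d,p,q) of (d,p,q) \<Rightarrow> acp (acp p (Oa q (aid x))) (aas C e m x))"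
    using m' d p q x m e' by (simp add: Oa_comp_idm)
  finally show "(act (self_act M) m' d, pst (R_tamb M C x) m' c d p, pst (R_tamb M (self_act M) m) m' d e q)
      \<in> coend_carrier (self_act M) (R_tamb M C x) (R_tamb M (self_act M) m) (act C m' c) (act (self_act M) m' e) \<and>
    (case (act (self_act M) m' d, pst (R_tamb M C x) m' c d p, pst (R_tamb M (self_act M) m) m' d e q) of
          (d,p,q) \<Rightarrow> acp (acp p (Oa q (aid x))) (aas C (act (self_act M) m' e) m x))
     = pst (R_tamb M C (Ac m x)) m' c e (case (d,p,q) of (d,p,q) \<Rightarrow> acp (acp p (Oa q (aid x))) (aas C e m x))"
    using m' d p q x m e' c by (auto simp: coend_carrier_def A.hom_iff M.hom_iff)
qed

end


context act_loc begin

lemma part3: assumes x: "x \<in> c_ob (ac C)" and m: "m \<in> mob"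
  shows "tamb_iso M (self_act M) C
              (tamb_comp (self_act M) (self_act M) C (L_tamb M (self_act M) m) (L_tamb M C x))
              (L_tamb M C (act C m x))"
proof (rule comp_iso_generic[where
      F="\<lambda>n c (d,p,q). acp (acp (inv_in (ac C) (Ac (T n m) x) (Ac n (Ac m x)) (aas C n m x)) (Oa p (aid x))) q" and
      s="\<lambda>n c h. (T n m, mid (T n m), acp (aas C n m x) h)"])
  show "cat_loc (ac C)" by unfold_locales
  show "cat_loc (ac (self_act M))" by simp unfold_locales
  show "\<And>m c. m \<in> mob \<Longrightarrow> c \<in> c_ob (ac C) \<Longrightarrow> Ac m c \<in> c_ob (ac C)" by simp
  show "\<And>m e. m \<in> mob \<Longrightarrow> e \<in> c_ob (ac (self_act M)) \<Longrightarrow> act (self_act M) m e \<in> c_ob (ac (self_act M))" by simp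
  show "coend_gen (self_act M) (self_act M) C (L_tamb M (self_act M) m) (L_tamb M C x) n c
     \<subseteq> coend_carrier (self_act M) (L_tamb M (self_act M) m) (L_tamb M C x) n c \<times> coend_carrier (self_act M) (L_tamb M (self_act M) m) (L_tamb M C x) n c"
    if "n \<in> c_ob (ac (self_act M))" "c \<in> c_ob (ac C)" for n c
    using that x m by (auto simp: coend_gen_def coend_carrier_def A.hom_iff M.hom_iff)
next
  fix n c u v assume n: "n \<in> c_ob (ac (self_act M))" and c: "c \<in> c_ob (ac C)"
    and uv: "(u,v) \<in> coend_gen (self_act M) (self_act M) C (L_tamb M (self_act M) m) (L_tamb M C x) n c"
  then obtain d d' g p q where u: "u = (d', mcp (mcp (Ta (mid n) (mid m)) p) g, q)"
    and v: "v = (d, p, acp (acp (Oa g (aid x)) q) (aid c))" and g: "g \<in> c_hom (mc M) d d'"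
    and p: "p \<in> c_hom (mc M) (T n m) d" and q: "q \<in> c_hom (ac C) (Ac d' x) c"
    by (auto simp: coend_gen_def)
  show "(case u of (d,p,q) \<Rightarrow> acp (acp (inv_in (ac C) (Ac (T n m) x) (Ac n (Ac m x)) (aas C n m x)) (Oa p (aid x))) q)
      = (case v of (d,p,q) \<Rightarrow> acp (acp (inv_in (ac C) (Ac (T n m) x) (Ac n (Ac m x)) (aas C n m x)) (Oa p (aid x))) q)"
    using u v g p q c n x m by (simp add: A.hom_iff M.hom_iff Oa_comp_idx)
next
  fix n c t assume n: "n \<in> c_ob (ac (self_act M))" and c: "c \<in> c_ob (ac C)"
    and t: "t \<in> coend_carrier (self_act M) (L_tamb M (self_act M) m) (L_tamb M C x) n c"
  then show "(case t of (d,p,q) \<Rightarrow> acp (acp (inv_in (ac C) (Ac (T n m) x) (Ac n (Ac m x)) (aas C n m x)) (Oa p (aid x))) q)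
     \<in> pobj (L_tamb M C (Ac m x)) n c"
    using x m by (auto simp: coend_carrier_def A.hom_iff M.hom_iff)
next
  fix n c h assume n: "n \<in> c_ob (ac (self_act M))" and c: "c \<in> c_ob (ac C)"
    and h: "h \<in> pobj (L_tamb M C (Ac m x)) n c"
  then show "(T n m, mid (T n m), acp (aas C n m x) h)
       \<in> coend_carrier (self_act M) (L_tamb M (self_act M) m) (L_tamb M C x) n c"
    using x m by (auto simp: coend_carrier_def A.hom_iff M.hom_iff)
  show "(case (T n m, mid (T n m), acp (aas C n m x) h) of (d,p,q) \<Rightarrow> acp (acp (inv_in (ac C) (Ac (T n m) x) (Ac n (Ac m x)) (aas C n m x)) (Oa p (aid x))) q) = h"
    using c n h x m by (auto simp: A.hom_iff M.hom_iff)
next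
  fix n c t assume n: "n \<in> c_ob (ac (self_act M))" and c: "c \<in> c_ob (ac C)"
    and t: "t \<in> coend_carrier (self_act M) (L_tamb M (self_act M) m) (L_tamb M C x) n c"
  then obtain d p q where tt: "t = (d,p,q)" and d: "d \<in> mob" and p: "p \<in> c_hom (mc M) (T n m) d"
    and q: "q \<in> c_hom (ac C) (Ac d x) c" by (auto simp: coend_carrier_def)
  let ?gen = "coend_gen (self_act M) (self_act M) C (L_tamb M (self_act M) m) (L_tamb M C x) n c"
  have "((d, mcp (mcp (Ta (mid n) (mid m)) (mid (T n m))) p, q), (T n m, mid (T n m), acp (acp (Oa p (aid x)) q) (aid c))) \<in> ?gen"
    unfolding coend_gen_def using d p q n m c x by (simp add: M.hom_iff) (rule exI[of _ p], simp)
  moreover have "(d, mcp (mcp (Ta (mid n) (mid m)) (mid (T n m))) p, q) = t"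
    using tt d p q n m c x by (simp add: M.hom_iff A.hom_iff)
  moreover have "(T n m, mid (T n m), acp (acp (Oa p (aid x)) q) (aid c)) =
     (T n m, mid (T n m), acp (aas C n m x) (case t of (d,p,q) \<Rightarrow> acp (acp (inv_in (ac C) (Ac (T n m) x) (Ac n (Ac m x)) (aas C n m x)) (Oa p (aid x))) q))"
    using tt d p q n m c x by (simp add: M.hom_iff A.hom_iff)
  ultimately show "(t, (\<lambda>n c h. (T n m, mid (T n m), acp (aas C n m x) h)) n c
       ((\<lambda>n c (d,p,q). acp (acp (inv_in (ac C) (Ac (T n m) x) (Ac n (Ac m x)) (aas C n m x)) (Oa p (aid x))) q) n c t))
     \<in> coend_eqv (self_act M) (self_act M) C (L_tamb M (self_act M) m) (L_tamb M C x) n c"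
    unfolding coend_eqv_def by (metis (no_types, lifting) UnI1 r_into_rtrancl)
next
  fix n n' c c' u k d p q
  assume u: "u \<in> c_hom (ac (self_act M)) n' n" and k: "k \<in> c_hom (ac C) c c'"
    and t: "(d,p,q) \<in> coend_carrier (self_act M) (L_tamb M (self_act M) m) (L_tamb M C x) n c"
  have d: "d \<in> mob" and p: "M.arr p" "mdom p = T n m" "mcod p = d" and q: "A.arr q" "c_dom (ac C) q = Ac d x" "c_cod (ac C) q = c"
    using t by (auto simp: coend_carrier_def A.hom_iff M.hom_iff)
  have u': "M.arr u" "mdom u = n'" "mcod u = n" using u M.hom_iff by auto
  have k': "A.arr k" "c_dom (ac C) k = c" "c_cod (ac C) k = c'" using k A.hom_iff by auto
  have ob: "n \<in> mob" "n' \<in> mob" using u' M.arr_ob by metis+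
  let ?I' = "inv_in (ac C) (Ac (T n' m) x) (Ac n' (Ac m x)) (aas C n' m x)"
  let ?I = "inv_in (ac C) (Ac (T n m) x) (Ac n (Ac m x)) (aas C n m x)"
  have k1: "acp ?I' (Oa (Ta u (mid m)) (aid x)) = acp (Oa u (aid (Ac m x))) ?I"
    using aas_inv_nat[of u "mid m" "aid x"] u' x m by simp
  have "(case (d, pmap (L_tamb M (self_act M) m) u (c_id (ac (self_act M)) d) p, pmap (L_tamb M C x) (c_id (ac (self_act M)) d) k q)
         of (d,p,q) \<Rightarrow> acp (acp (inv_in (ac C) (Ac (T n' m) x) (Ac n' (Ac m x)) (aas C n' m x)) (Oa p (aid x))) q)
      = acp (acp ?I' (Oa (Ta u (mid m)) (aid x))) (acp (Oa p (aid x)) (acp q k))"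
    using u' k' p q d x m ob by (simp add: Oa_comp_idx)
  also have "\<dots> = acp (acp (Oa u (aid (Ac m x))) ?I) (acp (Oa p (aid x)) (acp q k))"
    by (simp only: k1)
  also have "\<dots> = pmap (L_tamb M C (Ac m x)) u k (case (d,p,q) of (d,p,q) \<Rightarrow> acp (acp ?I (Oa p (aid x))) q)"
    using u' k' p q d x m ob by simp
  finally show "(d, pmap (L_tamb M (self_act M) m) u (c_id (ac (self_act M)) d) p, pmap (L_tamb M C x) (c_id (ac (self_act M)) d) k q)
       \<in> coend_carrier (self_act M) (L_tamb M (self_act M) m) (L_tamb M C x) n' c' \<and>
      (case (d, pmap (L_tamb M (self_act M) m) u (c_id (ac (self_act M)) d) p, pmap (L_tamb M C x) (c_id (ac (self_act M)) d) k q)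
         of (d,p,q) \<Rightarrow> acp (acp (inv_in (ac C) (Ac (T n' m) x) (Ac n' (Ac m x)) (aas C n' m x)) (Oa p (aid x))) q)
      = pmap (L_tamb M C (Ac m x)) u k (case (d,p,q) of (d,p,q) \<Rightarrow> acp (acp ?I (Oa p (aid x))) q)"
    using u' k' p q d x m ob by (auto simp: coend_carrier_def A.hom_iff M.hom_iff)
next
  fix m' n c d p q
  assume m': "m' \<in> mob" and n: "n \<in> c_ob (ac (self_act M))" and c: "c \<in> c_ob (ac C)"
    and t: "(d,p,q) \<in> coend_carrier (self_act M) (L_tamb M (self_act M) m) (L_tamb M C x) n c"
  have d: "d \<in> mob" and p: "M.arr p" "mdom p = T n m" "mcod p = d" and q: "A.arr q" "c_dom (ac C) q = Ac d x" "c_cod (ac C) q = c"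
    using t by (auto simp: coend_carrier_def A.hom_iff M.hom_iff)
  have n': "n \<in> mob" using n by simp
  let ?I1 = "inv_in (ac C) (Ac (T (T m' n) m) x) (Ac (T m' n) (Ac m x)) (aas C (T m' n) m x)"
  let ?I2 = "inv_in (ac C) (Ac (T n m) x) (Ac n (Ac m x)) (aas C n m x)"
  have k2: "acp (Oa (Ta (mid m') p) (aid x)) (aas C m' d x) = acp (aas C m' (T n m) x) (Oa (mid m') (Oa p (aid x)))"
    using aas_nat[of "mid m'" p "aid x"] m' p x by simp
  have "(case (act (self_act M) m' d, pst (L_tamb M (self_act M) m) m' n d p, pst (L_tamb M C x) m' d c q) of
          (d,p,q) \<Rightarrow> acp (acp (inv_in (ac C) (Ac (T (act (self_act M) m' n) m) x) (Ac (act (self_act M) m' n) (Ac m x)) (aas C (act (self_act M) m' n) m x)) (Oa p (aid x))) q)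
     = acp ?I1 (acp (Oa (asc M m' n m) (aid x)) (acp (acp (Oa (Ta (mid m') p) (aid x)) (aas C m' d x)) (Oa (mid m') q)))"
    using m' d p q x m n' by (simp add: Oa_comp_idx)
  also have "\<dots> = acp ?I1 (acp (Oa (asc M m' n m) (aid x)) (acp (acp (aas C m' (T n m) x) (Oa (mid m') (Oa p (aid x)))) (Oa (mid m') q)))"
    by (simp only: k2)
  also have "\<dots> = acp (acp ?I1 (acp (Oa (asc M m' n m) (aid x)) (aas C m' (T n m) x))) (acp (Oa (mid m') (Oa p (aid x))) (Oa (mid m') q))"
    using m' d p q x m n' by simp
  also have "\<dots> = acp (acp (aas C m' n (Ac m x)) (Oa (mid m') ?I2)) (acp (Oa (mid m') (Oa p (aid x))) (Oa (mid m') q))"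
    by (simp only: pent3[OF m' n' m x])
  also have "\<dots> = pst (L_tamb M C (Ac m x)) m' n c (case (d,p,q) of (d,p,q) \<Rightarrow> acp (acp ?I2 (Oa p (aid x))) q)"
    using m' d p q x m n' by (simp add: Oa_comp_idm)
  finally show "(act (self_act M) m' d, pst (L_tamb M (self_act M) m) m' n d p, pst (L_tamb M C x) m' d c q)
      \<in> coend_carrier (self_act M) (L_tamb M (self_act M) m) (L_tamb M C x) (act (self_act M) m' n) (Ac m' c) \<and>
    (case (act (self_act M) m' d, pst (L_tamb M (self_act M) m) m' n d p, pst (L_tamb M C x) m' d c q) of
          (d,p,q) \<Rightarrow> acp (acp (inv_in (ac C) (Ac (T (act (self_act M) m' n) m) x) (Ac (act (self_act M) m' n) (Ac m x)) (aas C (act (self_act M) m' n) m x)) (Oa p (aid x))) q)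
     = pst (L_tamb M C (Ac m x)) m' n c (case (d,p,q) of (d,p,q) \<Rightarrow> acp (acp ?I2 (Oa p (aid x))) q)"
    using m' d p q x m n' c by (auto simp: coend_carrier_def A.hom_iff M.hom_iff)
qed

end

theorem mainTheorem1:
  fixes M :: "('m,'f) moncat" and C :: "('m,'f,'c,'g) actegory"
  assumes "is_moncat M" and "is_actegory M C"
  shows "tamb_iso M (self_act M) (self_act M) (R_tamb M (self_act M) (mI M)) (hom_tamb M (self_act M))
       \<and> tamb_iso M (self_act M) (self_act M) (L_tamb M (self_act M) (mI M)) (hom_tamb M (self_act M))
       \<and> (\<forall>x\<in>c_ob (ac C). \<forall>m\<in>c_ob (mc M).
            tamb_iso M C (self_act M)
              (tamb_comp C (self_act M) (self_act M) (R_tamb M C x) (R_tamb M (self_act M) m))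
              (R_tamb M C (act C m x)))
       \<and> (\<forall>x\<in>c_ob (ac C). \<forall>m\<in>c_ob (mc M).
            tamb_iso M (self_act M) C
              (tamb_comp (self_act M) (self_act M) C (L_tamb M (self_act M) m) (L_tamb M C x))
              (L_tamb M C (act C m x)))"
proof -
  interpret act_loc M C using assms(2) by (simp add: act_loc_def)
  show ?thesis using part1R part1L part2 part3 by blast
qed



end
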